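(* Suppose $f:\mathbb{R}^n\to\mathbb{R}$ is bounded below by $f_{\mathrm{low}}$, twice continuously differentiable with $L_H$-Lipschitz continuous Hessian, and the Hessians at all iterates satisfy $\|\nabla^2 f(\mathbf{x}_k)\|\leq M$ for some $M>0$ independent of $k$. Fix an iteration $k$ and $\epsilon>0$. Suppose $P_k$ is well-aligned (with parameters $\alpha\in(0,1)$, $P_{\max}>0$), $\sigma_k\geq\epsilon$, and $$\theta := (1-\alpha)^2 - \frac{4M(r-1)\alpha^2}{\epsilon(1-\alpha)^2} > 0.$$ Then $\hat\sigma_k \geq \min((1-\alpha)^2,\theta)\,\epsilon$.
   Context: Iterates $\mathbf{x}_k\in\mathbb{R}^n$ and matrices $P_k\in\mathbb{R}^{n\times p}$ are given. Criticality measures: $\tau_k:=\max(-\lambda_{\min}(\nabla^2 f(\mathbf{x}_k)),0)$, $\sigma_k:=\max(\|\nabla f(\mathbf{x}_k)\|,\tau_k)$; $\hat\tau_k:=\max(-\lambda_{\min}(P_k^T\nabla^2 f(\mathbf{x}_k)P_k),0)$, $\hat\sigma_k:=\max(\|P_k^T\nabla f(\mathbf{x}_k)\|,\hat\tau_k)$. Write the eigendecomposition $\nabla^2 f(\mathbf{x}_k)=\sum_{i=1}^r\lambda_i\mathbf{v}_i\mathbf{v}_i^T$ with $\lambda_1\geq\cdots\geq\lambda_r$, $r:=\operatorname{rank}(\nabla^2 f(\mathbf{x}_k))$, $\mathbf{v}_1,\ldots,\mathbf{v}_r$ orthonormal, and set $\hat{\mathbf{v}}_i:=P_k^T\mathbf{v}_i\in\mathbb{R}^p$.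 $P_k$ is called well-aligned if $\|P_k\|\leq P_{\max}$, $\|P_k^T\nabla f(\mathbf{x}_k)\|\geq(1-\alpha)\|\nabla f(\mathbf{x}_k)\|$, $\|\hat{\mathbf{v}}_r\|\geq 1-\alpha$, and $(\hat{\mathbf{v}}_i^T\hat{\mathbf{v}}_r)^2\leq 4\alpha^2$ for all $i=1,\ldots,r-1$, for some $\alpha\in(0,1)$ and $P_{\max}>0$ independent of $k$. *)

theory Defs
  imports "HOL-Analysis.Analysis"
begin

definition matnorm :: "real^'p^'m \<Rightarrow> real" where
  "matnorm A = onorm (\<lambda>v. A *v v)"

definition lambda_min :: "real^'n^'n \<Rightarrow> real" where
  "lambda_min A = Inf {c. \<exists>v. v \<noteq> 0 \<and> A *v v = c *\<^sub>R v}"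

definition outer :: "real^'n \<Rightarrow> real^'n \<Rightarrow> real^'n^'n" where
  "outer u w = (\<chi> i j. u $ i * w $ j)"

definition tau_crit :: "real^'n^'n \<Rightarrow> real" where
  "tau_crit H = max (- lambda_min H) 0"

definition sigma_crit :: "real^'n \<Rightarrow> real^'n^'n \<Rightarrow> real" where
  "sigma_crit g H = max (norm g) (tau_crit H)"

definition tau_hat :: "real^'p^'n \<Rightarrow> real^'n^'n \<Rightarrow> real" where
  "tau_hat P H = max (- lambda_min (transpose P ** H ** P)) 0"

definition sigma_hat :: "real^'p^'n \<Rightarrow> real^'n \<Rightarrow> real^'n^'n \<Rightarrow> real" where
  "sigma_hat P g H = max (norm (transpose P *v g)) (tau_hat P H)"

definition is_eigdecomp :: "real^'n^'n \<Rightarrow> nat \<Rightarrow> (nat \<Rightarrow> real) \<Rightarrow> (nat \<Rightarrow> real^'n) \<Rightarrow> bool" where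
  "is_eigdecomp H r lam v \<longleftrightarrow>
     r = rank H \<and>
     H = (\<Sum>i=1..r. lam i *\<^sub>R outer (v i) (v i)) \<and>
     (\<forall>i j. 1 \<le> i \<and> i \<le> j \<and> j \<le> r \<longrightarrow> lam j \<le> lam i) \<and>
     (\<forall>i\<in>{1..r}. \<forall>j\<in>{1..r}. v i \<bullet> v j = (if i = j then 1 else 0))"

definition well_aligned :: "real \<Rightarrow> real \<Rightarrow> real^'p^'n \<Rightarrow> real^'n \<Rightarrow> nat \<Rightarrow> (nat \<Rightarrow> real^'n) \<Rightarrow> bool" where
  "well_aligned \<alpha> Pmax P g r v \<longleftrightarrow>
     matnorm P \<le> Pmax \<and>
     norm (transpose P *v g) \<ge> (1 - \<alpha>) * norm g \<and>
     norm (transpose P *v v r) \<ge> 1 - \<alpha> \<and>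
     (\<forall>i\<in>{1..r-1}. ((transpose P *v v i) \<bullet> (transpose P *v v r))\<^sup>2 \<le> 4 * \<alpha>\<^sup>2)"

end

theory Submission
  imports Defs
begin


lemma sym_min_eig:
  fixes A :: "real^'p^'p"
  assumes sym: "\<And>u w. u \<bullet> (A *v w) = w \<bullet> (A *v u)"
  shows "\<exists>m. lambda_min A = m \<and> (\<forall>y. m * (y \<bullet> y) \<le> y \<bullet> (A *v y)) \<and> (\<exists>w. w \<noteq> 0 \<and> A *v w = m *\<^sub>R w)"
proof -
  define q where "q = (\<lambda>y::real^'p. y \<bullet> (A *v y))"
  have cq: "continuous_on (sphere 0 1) q"
    unfolding q_def by (intro continuous_intros linear_continuous_on) auto
  obtain w0 where w0: "w0 \<in> sphere 0 1" and w0min: "\<forall>y\<in>sphere 0 1. q w0 \<le> q y"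
    using continuous_attains_inf[OF compact_sphere _ cq] by auto
  define m where "m = q w0"
  have nw0: "w0 \<bullet> w0 = 1" using w0 by (simp add: dot_square_norm)
  have low: "m * (y \<bullet> y) \<le> q y" for y
  proof (cases "y = 0")
    case True then show ?thesis by (simp add: q_def)
  next
    case False
    define s where "s = norm y"
    have s0: "s > 0" using False by (simp add: s_def)
    have "(y /\<^sub>R s) \<in> sphere 0 1" using s0 by (simp add: s_def)
    then have "m \<le> q (y /\<^sub>R s)" using w0min by (simp add: m_def)
    also have "q (y /\<^sub>R s) = q y / s^2"
      by (simp add: q_def matrix_vector_mult_scaleR power2_eq_square field_simps)
    finally have "m * s^2 \<le> q y" using s0 by (simp add: field_simps)
    moreover have "y \<bullet> y = s^2" by (simp add: s_def dot_square_norm)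
    ultimately show ?thesis by simp
  qed
  define d where "d = A *v w0 - m *\<^sub>R w0"
  have key: "0 \<le> 2 * t * (d \<bullet> d) + t^2 * (q d - m * (d \<bullet> d))" for t
  proof -
    have "0 \<le> q (w0 + t *\<^sub>R d) - m * ((w0 + t *\<^sub>R d) \<bullet> (w0 + t *\<^sub>R d))"
      using low[of "w0 + t *\<^sub>R d"] by simp
    also have "\<dots> = 2 * t * (d \<bullet> d) + t^2 * (q d - m * (d \<bullet> d))"
      using sym[of w0 d] nw0
      by (simp add: q_def d_def matrix_vector_right_distrib matrix_vector_mult_scaleR
          matrix_vector_mult_diff_distrib inner_add_left inner_add_right inner_diff_left
          inner_diff_right m_def power2_eq_square algebra_simps inner_commute)
    finally show ?thesis .
  qed
  have Qnn: "q d - m * (d \<bullet> d) \<ge> 0" using low[of d] by simp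
  have "d \<bullet> d = 0"
  proof (rule ccontr)
    assume "d \<bullet> d \<noteq> 0"
    then have D: "d \<bullet> d > 0" by (simp add: order_le_neq_trans)
    define Q where "Q = q d - m * (d \<bullet> d)"
    define DD where "DD = d \<bullet> d"
    have Q0: "Q \<ge> 0" using Qnn by (simp add: Q_def)
    define t where "t = - DD / (Q + 1)"
    have "0 \<le> 2 * t * DD + t^2 * Q" using key[of t] by (simp add: Q_def DD_def)
    moreover have "2 * t * DD + t^2 * Q = DD^2 * (- Q - 2) / (Q+1)^2"
    proof -
      define e where "e = Q + 1"
      have e: "e > 0" using Q0 by (simp add: e_def)
      have Qe: "Q = e - 1" by (simp add: e_def)
      have "2 * (- DD / e) * DD + (- DD / e)^2 * (e - 1) = DD^2 * (- (e - 1) - 2) / e^2"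
        using e by (simp add: field_simps power2_eq_square)
      then show ?thesis using t_def by (simp add: e_def)
    qed
    moreover have "DD^2 * (- Q - 2) / (Q+1)^2 < 0"
      using Q0 D by (intro divide_neg_pos mult_pos_neg) (auto simp: DD_def)
    ultimately show False by linarith
  qed
  then have eig: "A *v w0 = m *\<^sub>R w0" by (simp add: d_def)
  have "w0 \<noteq> 0" using w0 by auto
  have "lambda_min A = m"
    unfolding lambda_min_def
  proof (rule cInf_eq_minimum)
    show "m \<in> {c. \<exists>v. v \<noteq> 0 \<and> A *v v = c *\<^sub>R v}" using eig \<open>w0 \<noteq> 0\<close> by auto
  next
    fix c assume "c \<in> {c. \<exists>v. v \<noteq> 0 \<and> A *v v = c *\<^sub>R v}"
    then obtain v where v: "v \<noteq> 0" "A *v v = c *\<^sub>R v" by auto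
    have "m * (v \<bullet> v) \<le> c * (v \<bullet> v)" using low[of v] v by (simp add: q_def)
    moreover have "v \<bullet> v > 0" using v by simp
    ultimately show "m \<le> c" by simp
  qed
  moreover have "\<forall>y. m * (y \<bullet> y) \<le> y \<bullet> (A *v y)" using low by (simp add: q_def)
  ultimately show ?thesis using eig \<open>w0 \<noteq> 0\<close> by blast
qed

lemma outer_sum_apply:
  "(\<Sum>i\<in>S. c i *\<^sub>R outer (v i) (v i)) *v w = (\<Sum>i\<in>S. (c i * (v i \<bullet> w)) *\<^sub>R v i)"
  apply (simp add: vec_eq_iff matrix_vector_mult_def outer_def inner_vec_def sum_component
      sum_distrib_left sum_distrib_right mult.assoc mult.left_commute sum.swap[of _ S])
  apply (auto intro!: sum.cong simp: ac_simps)
  done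

lemma adj_transpose: "u \<bullet> (transpose P *v y) = (P *v u) \<bullet> (y::real^'n)"
  by (metis dot_lmul_matrix inner_commute transpose_matrix_vector)



theorem lemma3p8:
  fixes f :: "real^'n \<Rightarrow> real"
    and g :: "real^'n \<Rightarrow> real^'n"
    and H :: "real^'n \<Rightarrow> real^'n^'n"
    and x :: "nat \<Rightarrow> real^'n"
    and P :: "nat \<Rightarrow> real^'p^'n"
    and flow LH M \<alpha> Pmax \<epsilon> :: real
    and k r :: nat
    and lam :: "nat \<Rightarrow> real"
    and v :: "nat \<Rightarrow> real^'n"
  assumes bounded_below: "\<forall>y. flow \<le> f y"
    and grad: "\<forall>y. (f has_derivative (\<lambda>h. g y \<bullet> h)) (at y)"
    and hess: "\<forall>y. (g has_derivative (\<lambda>h. H y *v h)) (at y)"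
    and hess_cont: "continuous_on UNIV H"
    and hess_lip: "\<forall>y z. matnorm (H y - H z) \<le> LH * norm (y - z)"
    and M_pos: "M > 0"
    and hess_bdd: "\<forall>j. matnorm (H (x j)) \<le> M"
    and eps_pos: "\<epsilon> > 0"
    and alpha: "0 < \<alpha>" "\<alpha> < 1"
    and Pmax_pos: "Pmax > 0"
    and eig: "is_eigdecomp (H (x k)) r lam v"
    and aligned: "well_aligned \<alpha> Pmax (P k) (g (x k)) r v"
    and sigma_ge: "sigma_crit (g (x k)) (H (x k)) \<ge> \<epsilon>"
    and theta_pos: "(1 - \<alpha>)\<^sup>2 - 4 * M * (real r - 1) * \<alpha>\<^sup>2 / (\<epsilon> * (1 - \<alpha>)\<^sup>2) > 0"
  shows "sigma_hat (P k) (g (x k)) (H (x k))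
           \<ge> min ((1 - \<alpha>)\<^sup>2) ((1 - \<alpha>)\<^sup>2 - 4 * M * (real r - 1) * \<alpha>\<^sup>2 / (\<epsilon> * (1 - \<alpha>)\<^sup>2)) * \<epsilon>"
proof -
  define Hk where "Hk = H (x k)"
  define gk where "gk = g (x k)"
  define Pk where "Pk = P k"
  define K where "K = 4 * M * (real r - 1) * \<alpha>\<^sup>2"
  define \<theta> where "\<theta> = (1 - \<alpha>)\<^sup>2 - K / (\<epsilon> * (1 - \<alpha>)\<^sup>2)"
  have a1: "0 < 1 - \<alpha>" "1 - \<alpha> < 1" using alpha by auto
  have eigd: "Hk = (\<Sum>i=1..r. lam i *\<^sub>R outer (v i) (v i))"
    "\<And>i j. 1 \<le> i \<Longrightarrow> i \<le> j \<Longrightarrow> j \<le> r \<Longrightarrow> lam j \<le> lam i"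
    "\<And>i j. i\<in>{1..r} \<Longrightarrow> j\<in>{1..r} \<Longrightarrow> v i \<bullet> v j = (if i = j then 1 else 0)"
  proof -
    have E: "r = rank Hk \<and>
     Hk = (\<Sum>i=1..r. lam i *\<^sub>R outer (v i) (v i)) \<and>
     (\<forall>i j. 1 \<le> i \<and> i \<le> j \<and> j \<le> r \<longrightarrow> lam j \<le> lam i) \<and>
     (\<forall>i\<in>{1..r}. \<forall>j\<in>{1..r}. v i \<bullet> v j = (if i = j then 1 else 0))"
      using eig unfolding is_eigdecomp_def Hk_def .
    show "Hk = (\<Sum>i=1..r. lam i *\<^sub>R outer (v i) (v i))" using E by blast
    show "\<And>i j. 1 \<le> i \<Longrightarrow> i \<le> j \<Longrightarrow> j \<le> r \<Longrightarrow> lam j \<le> lam i" using E by blast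
    show "\<And>i j. i\<in>{1..r} \<Longrightarrow> j\<in>{1..r} \<Longrightarrow> v i \<bullet> v j = (if i = j then 1 else 0)"
      using E by blast
  qed
  have al: "norm (transpose Pk *v gk) \<ge> (1 - \<alpha>) * norm gk"
    "norm (transpose Pk *v v r) \<ge> 1 - \<alpha>"
    "\<And>i. i\<in>{1..r-1} \<Longrightarrow> ((transpose Pk *v v i) \<bullet> (transpose Pk *v v r))\<^sup>2 \<le> 4 * \<alpha>\<^sup>2"
    using aligned unfolding well_aligned_def Pk_def gk_def by auto
  have Hw: "Hk *v w = (\<Sum>i=1..r. (lam i * (v i \<bullet> w)) *\<^sub>R v i)" for w
    by (subst eigd(1)) (rule outer_sum_apply)
  have Hqf: "w \<bullet> (Hk *v w) = (\<Sum>i=1..r. lam i * (v i \<bullet> w)^2)" for w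
    unfolding Hw inner_sum_right by (intro sum.cong refl) (simp add: inner_commute power2_eq_square mult_ac)
  have symH: "u \<bullet> (Hk *v w) = w \<bullet> (Hk *v u)" for u w
    unfolding Hw inner_sum_right by (intro sum.cong refl) (simp add: inner_commute mult_ac)
  have Hvj: "Hk *v v j = lam j *\<^sub>R v j" if j: "j \<in> {1..r}" for j
  proof -
    have "Hk *v v j = (\<Sum>i=1..r. (if i = j then lam j *\<^sub>R v j else 0))"
      unfolding Hw by (rule sum.cong[OF refl]) (simp add: eigd(3)[OF _ j])
    also have "\<dots> = lam j *\<^sub>R v j" using j by simp
    finally show ?thesis .
  qed
  have lamM: "\<bar>lam j\<bar> \<le> M" if j: "j \<in> {1..r}" for j
  proof -
    have nv: "norm (v j) = 1" using eigd(3)[OF j j] by (simp add: norm_eq_sqrt_inner)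
    have "norm (Hk *v v j) \<le> matnorm Hk * norm (v j)"
      unfolding matnorm_def by (rule onorm) simp
    then have "\<bar>lam j\<bar> \<le> matnorm Hk" using Hvj[OF j] nv by simp
    also have "\<dots> \<le> M" using hess_bdd by (simp add: Hk_def)
    finally show ?thesis .
  qed
  have minle: "min ((1 - \<alpha>)\<^sup>2) \<theta> \<le> (1 - \<alpha>)\<^sup>2" by simp
  have sh: "sigma_hat Pk gk Hk \<ge> norm (transpose Pk *v gk)" "sigma_hat Pk gk Hk \<ge> tau_hat Pk Hk"
    unfolding sigma_hat_def by auto
  have "min ((1 - \<alpha>)\<^sup>2) \<theta> * \<epsilon> \<le> sigma_hat Pk gk Hk"
  proof (cases "norm gk \<ge> \<epsilon>")
    case True
    have "min ((1 - \<alpha>)\<^sup>2) \<theta> * \<epsilon> \<le> (1 - \<alpha>)\<^sup>2 * \<epsilon>"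
      using minle eps_pos by (intro mult_right_mono) auto
    also have "\<dots> \<le> (1 - \<alpha>) * \<epsilon>"
      using a1 eps_pos by (intro mult_right_mono) (auto simp: power2_eq_square)
    also have "\<dots> \<le> (1 - \<alpha>) * norm gk" using a1 True by (intro mult_left_mono) auto
    also have "\<dots> \<le> sigma_hat Pk gk Hk" using al(1) sh(1) by linarith
    finally show ?thesis .
  next
    case False
    then have tau: "tau_crit Hk \<ge> \<epsilon>" using sigma_ge unfolding sigma_crit_def Hk_def gk_def by auto
    obtain mH w where mH: "lambda_min Hk = mH" "w \<noteq> 0" "Hk *v w = mH *\<^sub>R w"
      using sym_min_eig[of Hk] symH by blast
    have mHe: "mH \<le> - \<epsilon>" using tau eps_pos mH(1) unfolding tau_crit_def by linarith
    have "\<exists>j\<in>{1..r}. v j \<bullet> w \<noteq> 0"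
    proof (rule ccontr)
      assume "\<not> ?thesis"
      then have "Hk *v w = 0" unfolding Hw by (intro sum.neutral) auto
      then show False using mH mHe eps_pos by auto
    qed
    then obtain j where j: "j \<in> {1..r}" "v j \<bullet> w \<noteq> 0" by blast
    have "v j \<bullet> (Hk *v w) = lam j * (v j \<bullet> w)"
      using symH[of "v j" w] Hvj[OF j(1)] by (simp add: inner_commute)
    then have "lam j = mH" using mH(3) j(2) by simp
    then have r1: "r \<ge> 1" and lamr: "lam r \<le> - \<epsilon>"
      using j(1) eigd(2)[of j r] mHe by auto
    define A where "A = transpose Pk ** Hk ** Pk"
    have Aw: "A *v w = transpose Pk *v (Hk *v (Pk *v w))" for w
      by (simp add: A_def matrix_vector_mul_assoc matrix_mul_assoc)
    have symA: "u \<bullet> (A *v w) = w \<bullet> (A *v u)" for u w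
      unfolding Aw adj_transpose using symH by simp
    obtain mA where mA: "lambda_min A = mA" "\<And>y. mA * (y \<bullet> y) \<le> y \<bullet> (A *v y)"
      using sym_min_eig[of A] symA by blast
    define uh where "uh = (\<lambda>i. transpose Pk *v v i)"
    define u where "u = uh r"
    define N where "N = u \<bullet> u"
    have nu: "norm u \<ge> 1 - \<alpha>" using al(2) by (simp add: u_def uh_def)
    have N1: "N \<ge> (1 - \<alpha>)\<^sup>2" unfolding N_def dot_square_norm
      using nu a1 by (intro power_mono) auto
    have Npos: "N > 0" using N1 a1 by (smt (verit) zero_less_power)
    have "u \<bullet> (A *v u) = (\<Sum>i=1..r. lam i * (uh i \<bullet> u)^2)"
      unfolding Aw adj_transpose Hqf
      by (intro sum.cong refl) (simp add: uh_def dot_lmul_matrix)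
    also have "\<dots> = lam r * (uh r \<bullet> u)^2 + (\<Sum>i\<in>{1..r-1}. lam i * (uh i \<bullet> u)^2)"
    proof -
      have "{1..r} = insert r {1..r-1}" using r1 by auto
      then show ?thesis using r1 by simp
    qed
    also have "\<dots> \<le> - \<epsilon> * N^2 + K"
    proof (rule add_mono)
      show "lam r * (uh r \<bullet> u)^2 \<le> - \<epsilon> * N^2"
        using lamr unfolding N_def u_def by (intro mult_right_mono) auto
      have "(\<Sum>i\<in>{1..r-1}. lam i * (uh i \<bullet> u)^2) \<le> of_nat (card {1..r-1}) * (M * (4 * \<alpha>\<^sup>2))"
      proof (rule sum_bounded_above)
        fix i assume i: "i \<in> {1..r-1}"
        then have i': "i \<in> {1..r}" by auto
        have "lam i * (uh i \<bullet> u)^2 \<le> \<bar>lam i\<bar> * (uh i \<bullet> u)^2" by (intro mult_right_mono) auto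
        also have "\<dots> \<le> M * (4 * \<alpha>\<^sup>2)"
          using lamM[OF i'] al(3)[OF i] by (intro mult_mono) (auto simp: uh_def u_def)
        finally show "lam i * (uh i \<bullet> u)^2 \<le> M * (4 * \<alpha>\<^sup>2)" .
      qed
      also have "\<dots> = K" using r1 by (simp add: K_def of_nat_diff)
      finally show "(\<Sum>i\<in>{1..r-1}. lam i * (uh i \<bullet> u)^2) \<le> K" .
    qed
    finally have "mA * N \<le> - \<epsilon> * N^2 + K" using mA(2)[of u] unfolding N_def by linarith
    then have "mA \<le> - \<epsilon> * N + K / N" using Npos
      by (simp add: field_simps power2_eq_square)
    also have "\<dots> \<le> - \<epsilon> * (1 - \<alpha>)\<^sup>2 + K / (1 - \<alpha>)\<^sup>2"
    proof (rule add_mono)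
      show "- \<epsilon> * N \<le> - \<epsilon> * (1 - \<alpha>)\<^sup>2" using N1 eps_pos by simp
      have "K \<ge> 0" using r1 M_pos by (simp add: K_def)
      then show "K / N \<le> K / (1 - \<alpha>)\<^sup>2" using N1 a1 Npos by (intro divide_left_mono) auto
    qed
    also have "\<dots> = - (\<theta> * \<epsilon>)" using eps_pos a1 by (simp add: \<theta>_def field_simps)
    finally have "\<theta> * \<epsilon> \<le> tau_hat Pk Hk" unfolding tau_hat_def A_def[symmetric] mA(1) by linarith
    moreover have "min ((1 - \<alpha>)\<^sup>2) \<theta> * \<epsilon> \<le> \<theta> * \<epsilon>" using eps_pos by (intro mult_right_mono) auto
    ultimately show ?thesis using sh(2) by linarith
  qed
  then show ?thesis by (simp add: Hk_def gk_def Pk_def \<theta>_def K_def)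
qed

end
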